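(* Let $A$ be a ring and $I\subset A$ an ideal such that $A_{I\text{-tor}}\cap I=(0)$. Then $A$ is $I$-adically separated (resp. $I$-adically complete) if and only if $A/A_{I\text{-tor}}$ is $I$-adically separated (resp. $I$-adically complete).
   Context: Rings are commutative with $1$. $A_{I\text{-tor}}$ is the ideal of $x\in A$ such that for every $a\in I$ there is $n>0$ with $a^nx=0$. "$I$-adically complete" means Hausdorff complete for the $I$-adic topology. *)

theory Defs
  imports "HOL-Algebra.Algebra"
begin

primrec ideal_pow :: "('a, 'b) ring_scheme \<Rightarrow> 'a set \<Rightarrow> nat \<Rightarrow> 'a set" where
  "ideal_pow R I 0 = carrier R"
| "ideal_pow R I (Suc n) = ideal_prod R I (ideal_pow R I n)"

definition tor :: "('a, 'b) ring_scheme \<Rightarrow> 'a set \<Rightarrow> 'a set" where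
  "tor R I = {x \<in> carrier R. \<forall>a\<in>I. \<exists>n::nat. n > 0 \<and> a [^]\<^bsub>R\<^esub> n \<otimes>\<^bsub>R\<^esub> x = \<zero>\<^bsub>R\<^esub>}"

definition adic_separated :: "('a, 'b) ring_scheme \<Rightarrow> 'a set \<Rightarrow> bool" where
  "adic_separated R I \<longleftrightarrow> (\<Inter>n. ideal_pow R I n) = {\<zero>\<^bsub>R\<^esub>}"

text \<open>I-adically (Hausdorff) complete: the canonical map R \<rightarrow> lim R/I^n is bijective.
  Injectivity is separatedness; surjectivity says every compatible family of cosets
  c_n \<in> R/I^n (c_(n+1) maps to c_n, i.e. c_(n+1) \<subseteq> c_n) comes from an element.\<close>
definition adic_complete :: "('a, 'b) ring_scheme \<Rightarrow> 'a set \<Rightarrow> bool" where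
  "adic_complete R I \<longleftrightarrow> adic_separated R I \<and>
     (\<forall>c::nat \<Rightarrow> 'a set.
        (\<forall>n. c n \<in> a_rcosets\<^bsub>R\<^esub> (ideal_pow R I n)) \<and> (\<forall>n. c (Suc n) \<subseteq> c n)
        \<longrightarrow> (\<exists>x\<in>carrier R. \<forall>n. c n = ideal_pow R I n +>\<^bsub>R\<^esub> x))"

definition quot_ideal :: "('a, 'b) ring_scheme \<Rightarrow> 'a set \<Rightarrow> 'a set \<Rightarrow> 'a set set" where
  "quot_ideal R J I = (\<lambda>a. J +>\<^bsub>R\<^esub> a) ` I"

end

theory Submission
  imports Defs
begin

lemma (in cring) tor_ideal:
  assumes I: "ideal I R"
  shows "ideal (tor R I) R"
proof -
  have Ic: "\<And>a. a \<in> I \<Longrightarrow> a \<in> carrier R" using ideal.Icarr[OF I] by blast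
  have sub: "subgroup (tor R I) (add_monoid R)"
  proof (rule subgroup.intro)
    show "tor R I \<subseteq> carrier (add_monoid R)" by (auto simp: tor_def)
    show "\<one>\<^bsub>add_monoid R\<^esub> \<in> tor R I"
      by (auto simp: tor_def Ic intro!: exI[of _ 1])
    fix x y assume x: "x \<in> tor R I" and y: "y \<in> tor R I"
    show "x \<otimes>\<^bsub>add_monoid R\<^esub> y \<in> tor R I"
      unfolding tor_def
    proof (simp, intro conjI ballI)
      show xy: "x \<oplus> y \<in> carrier R" using x y by (auto simp: tor_def)
      fix a assume a: "a \<in> I"
      obtain n :: nat where n: "n > 0" "a [^] n \<otimes> x = \<zero>" using x a by (auto simp: tor_def)
      obtain m :: nat where m: "m > 0" "a [^] m \<otimes> y = \<zero>" using y a by (auto simp: tor_def)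
      have xc: "x \<in> carrier R" and yc: "y \<in> carrier R" using x y by (auto simp: tor_def)
      have ac: "a \<in> carrier R" using a Ic by blast
      have pc: "a [^] n \<in> carrier R" and qc: "a [^] m \<in> carrier R" using ac by simp_all
      have pq: "a [^] (n + m) = a [^] n \<otimes> a [^] m" using ac by (simp add: nat_pow_mult)
      have "a [^] n \<otimes> a [^] m \<otimes> (x \<oplus> y) = a [^] m \<otimes> (a [^] n \<otimes> x) \<oplus> a [^] n \<otimes> (a [^] m \<otimes> y)"
        using pc qc xc yc by algebra
      then have "a [^] (n + m) \<otimes> (x \<oplus> y) = a [^] m \<otimes> (a [^] n \<otimes> x) \<oplus> a [^] n \<otimes> (a [^] m \<otimes> y)"
        using pq by simp
      also have "\<dots> = \<zero>" using n m ac by simp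
      finally show "\<exists>n::nat. n > 0 \<and> a [^] n \<otimes> (x \<oplus> y) = \<zero>" using n(1) by (intro exI[of _ "n+m"]) simp
    qed
  next
    fix x assume x: "x \<in> tor R I"
    show "inv\<^bsub>add_monoid R\<^esub> x \<in> tor R I"
      unfolding tor_def a_inv_def[symmetric]
    proof (simp, intro conjI ballI)
      have xc: "x \<in> carrier R" using x by (auto simp: tor_def)
      then show "\<ominus> x \<in> carrier R" by simp
      fix a assume a: "a \<in> I"
      obtain n :: nat where n: "n > 0" "a [^] n \<otimes> x = \<zero>" using x a by (auto simp: tor_def)
      have ac: "a \<in> carrier R" using a Ic by blast
      have "a [^] n \<otimes> (\<ominus> x) = \<ominus> (a [^] n \<otimes> x)" using ac xc by (simp add: r_minus)
      then show "\<exists>n::nat. n > 0 \<and> a [^] n \<otimes> (\<ominus> x) = \<zero>" using n by (intro exI[of _ n]) simp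
    qed
  qed
  show ?thesis
  proof (rule idealI[OF ring_axioms sub])
    fix t r assume t: "t \<in> tor R I" and r: "r \<in> carrier R"
    have tc: "t \<in> carrier R" using t by (auto simp: tor_def)
    have rt: "r \<otimes> t \<in> tor R I"
      unfolding tor_def
    proof (simp add: r tc, intro ballI)
      fix a assume a: "a \<in> I"
      obtain n :: nat where n: "n > 0" "a [^] n \<otimes> t = \<zero>" using t a by (auto simp: tor_def)
      have ac: "a \<in> carrier R" using a Ic by blast
      have "a [^] n \<otimes> (r \<otimes> t) = r \<otimes> (a [^] n \<otimes> t)"
        using m_lcomm[OF nat_pow_closed[OF ac] r tc] .
      then show "\<exists>n::nat. n > 0 \<and> a [^] n \<otimes> (r \<otimes> t) = \<zero>" using n r by (intro exI[of _ n]) simp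
    qed
    show "r \<otimes> t \<in> tor R I" by (rule rt)
    show "t \<otimes> r \<in> tor R I" using rt r tc by (simp add: m_comm)
  qed
qed

lemma (in ring) ideal_pow_ideal:
  assumes "ideal I R" shows "ideal (ideal_pow R I n) R"
  by (induction n) (simp_all add: oneideal ideal_prod_is_ideal assms)

lemma (in ring) ideal_pow_Suc_sub:
  assumes "ideal I R" shows "ideal_pow R I (Suc n) \<subseteq> ideal_pow R I n \<inter> I"
  using ideal_prod_inter[OF assms ideal_pow_ideal[OF assms, of n]] by auto

lemma (in ring) ideal_pow_anti:
  assumes "ideal I R" "m \<le> n" shows "ideal_pow R I n \<subseteq> ideal_pow R I m"
proof -
  have "\<And>k. ideal_pow R I (Suc k) \<subseteq> ideal_pow R I k" using ideal_pow_Suc_sub[OF assms(1)] by simp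
  then show ?thesis using lift_Suc_antimono_le[of "ideal_pow R I", OF _ assms(2)] by simp
qed

lemma (in ring) hom_ideal_prod:
  assumes h: "h \<in> ring_hom R S" and S: "ring S" and I: "ideal I R" and J: "ideal J R"
  shows "ideal_prod S (h ` I) (h ` J) = h ` ideal_prod R I J"
proof
  have Ic: "I \<subseteq> carrier R" by (rule subsetI, rule ideal.Icarr[OF I])
  have Jc: "J \<subseteq> carrier R" by (rule subsetI, rule ideal.Icarr[OF J])
  have IJc: "ideal_prod R I J \<subseteq> carrier R" by (rule ideal_prod_in_carrier[OF I J])
  show "ideal_prod S (h ` I) (h ` J) \<subseteq> h ` ideal_prod R I J"
  proof
    fix s assume "s \<in> ideal_prod S (h ` I) (h ` J)"
    then show "s \<in> h ` ideal_prod R I J"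
    proof (induction s rule: ideal_prod.induct)
      case (prod i j)
      then obtain i' j' where ij: "i' \<in> I" "j' \<in> J" "i = h i'" "j = h j'" by auto
      have c: "i' \<in> carrier R" "j' \<in> carrier R" using ij Ic Jc by auto
      have "i \<otimes>\<^bsub>S\<^esub> j = h (i' \<otimes> j')" using ring_hom_mult[OF h c] ij by simp
      moreover have "i' \<otimes> j' \<in> ideal_prod R I J" using ij by (simp add: ideal_prod.prod)
      ultimately show ?case by (rule image_eqI)
    next
      case (sum s1 s2)
      then obtain a b where ab: "a \<in> ideal_prod R I J" "b \<in> ideal_prod R I J" "s1 = h a" "s2 = h b"
        by auto
      have c: "a \<in> carrier R" "b \<in> carrier R" using ab IJc by auto
      have "s1 \<oplus>\<^bsub>S\<^esub> s2 = h (a \<oplus> b)" using ring_hom_add[OF h c] ab by simp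
      moreover have "a \<oplus> b \<in> ideal_prod R I J" using ab by (simp add: ideal_prod.sum)
      ultimately show ?case by (rule image_eqI)
    qed
  qed
  show "h ` ideal_prod R I J \<subseteq> ideal_prod S (h ` I) (h ` J)"
  proof
    fix s assume "s \<in> h ` ideal_prod R I J"
    then obtain s' where s': "s' \<in> ideal_prod R I J" "s = h s'" by auto
    have "h s' \<in> ideal_prod S (h ` I) (h ` J)" using s'(1)
    proof (induction s' rule: ideal_prod.induct)
      case (prod i j)
      have c: "i \<in> carrier R" "j \<in> carrier R" using prod Ic Jc by auto
      have "h i \<otimes>\<^bsub>S\<^esub> h j \<in> ideal_prod S (h ` I) (h ` J)"
        using prod by (intro ideal_prod.prod) auto
      then show ?case using ring_hom_mult[OF h c] by simp
    next
      case (sum s1 s2)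
      have c: "s1 \<in> carrier R" "s2 \<in> carrier R" using sum IJc by auto
      have "h s1 \<oplus>\<^bsub>S\<^esub> h s2 \<in> ideal_prod S (h ` I) (h ` J)"
        using sum by (intro ideal_prod.sum) auto
      then show ?case using ring_hom_add[OF h c] by simp
    qed
    then show "s \<in> ideal_prod S (h ` I) (h ` J)" using s' by simp
  qed
qed

lemma (in ideal) quot_carrier: "carrier (R Quot I) = (+>) I ` carrier R"
  unfolding FactRing_def A_RCOSETS_def' by auto

lemma (in ideal) quot_zero: "\<zero>\<^bsub>R Quot I\<^esub> = I"
  unfolding FactRing_def by simp

lemma (in ideal) quot_coset:
  assumes "H \<subseteq> carrier R" "x \<in> carrier R"
  shows "((+>) I ` H) +>\<^bsub>R Quot I\<^esub> (I +> x) = (+>) I ` (H +> x)"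
proof -
  have "((+>) I ` H) +>\<^bsub>R Quot I\<^esub> (I +> x) = (\<Union>h\<in>H. {set_add R (I +> h) (I +> x)})"
    unfolding a_r_coset_def' by (simp add: FactRing_def)
  also have "\<dots> = (\<Union>h\<in>H. {I +> (h \<oplus> x)})"
    using assms by (intro SUP_cong) (auto simp: a_rcos_sum)
  also have "\<dots> = (+>) I ` (H +> x)"
    unfolding a_r_coset_def' by auto
  finally show ?thesis .
qed

lemma (in ideal) quot_rcosets:
  assumes "H \<subseteq> carrier R"
  shows "c \<in> a_rcosets\<^bsub>R Quot I\<^esub> ((+>) I ` H) \<longleftrightarrow> (\<exists>x\<in>carrier R. c = (+>) I ` (H +> x))"
proof -
  show ?thesis
    unfolding A_RCOSETS_def' quot_carrier using quot_coset[OF assms] by auto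
qed

lemma (in ideal) rcos_eq_iff:
  assumes "x \<in> carrier R" "y \<in> carrier R"
  shows "(I +> x = I +> y) \<longleftrightarrow> x \<ominus> y \<in> I"
proof
  assume "I +> x = I +> y"
  then have "x \<in> I +> y" using assms a_repr_independenceD by metis
  then show "x \<ominus> y \<in> I" using a_rcos_module_minus[OF ring_axioms assms(2,1)] by simp
next
  assume "x \<ominus> y \<in> I"
  then have "x \<in> I +> y" using a_rcos_module_minus[OF ring_axioms assms(2,1)] by simp
  then show "I +> x = I +> y" using a_repr_independence' assms by metis
qed

lemma (in ideal) rcos_zero_iff:
  assumes "x \<in> carrier R"
  shows "(I +> x = I) \<longleftrightarrow> x \<in> I"
proof -
  have "I = I +> \<zero>" by (simp add: a_rcos_const additive_subgroup.zero_closed is_additive_subgroup)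
  then show ?thesis using rcos_eq_iff[OF assms zero_closed] assms by (simp add: minus_eq)
qed

lemma (in ideal) quot_pow:
  assumes J: "ideal J R"
  shows "ideal_pow (R Quot I) ((+>) I ` J) n = (+>) I ` ideal_pow R J n"
proof (induction n)
  case 0 then show ?case by (simp add: quot_carrier)
next
  case (Suc n)
  have "ideal_pow (R Quot I) ((+>) I ` J) (Suc n) = ideal_prod (R Quot I) ((+>) I ` J) ((+>) I ` ideal_pow R J n)"
    using Suc by simp
  also have "\<dots> = (+>) I ` ideal_prod R J (ideal_pow R J n)"
    by (rule hom_ideal_prod[OF rcos_ring_hom quotient_is_ring J ideal_pow_ideal[OF J]])
  finally show ?case by simp
qed


lemma (in ring) ideal_add':
  assumes "ideal K R" "a \<in> K" "b \<in> K" shows "a \<oplus> b \<in> K"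
  by (rule additive_subgroup.a_closed[OF ideal.axioms(1)[OF assms(1)] assms(2,3)])

lemma (in ring) ideal_minus':
  assumes "ideal K R" "a \<in> K" "b \<in> K" shows "a \<ominus> b \<in> K"
  unfolding a_minus_def
  by (rule additive_subgroup.a_closed[OF ideal.axioms(1)[OF assms(1)] assms(2)
        additive_subgroup.a_inv_closed[OF ideal.axioms(1)[OF assms(1)] assms(3)]])

lemma (in ring) ideal_zero':
  assumes "ideal K R" shows "\<zero> \<in> K"
  by (rule additive_subgroup.zero_closed[OF ideal.axioms(1)[OF assms(1)]])

lemma (in ring) ideal_cos_iff:
  assumes "ideal K R" "x \<in> carrier R"
  shows "w \<in> K +> x \<longleftrightarrow> w \<in> carrier R \<and> w \<ominus> x \<in> K"
proof -
  interpret K: ideal K R by fact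
  show ?thesis
  proof
    assume w: "w \<in> K +> x"
    have wc: "w \<in> carrier R" by (rule K.a_elemrcos_carrier[OF assms(2) w])
    have "w \<ominus> x \<in> K" using w K.a_rcos_module_minus[OF ring_axioms assms(2) wc] by simp
    then show "w \<in> carrier R \<and> w \<ominus> x \<in> K" using wc by simp
  next
    assume h: "w \<in> carrier R \<and> w \<ominus> x \<in> K"
    then show "w \<in> K +> x" using K.a_rcos_module_minus[OF ring_axioms assms(2)] by simp
  qed
qed

locale p310 = cring +
  fixes I :: "'a set"
  assumes I: "ideal I R" and TI: "tor R I \<inter> I = {\<zero>}"

sublocale p310 \<subseteq> T: ideal "tor R I" R by (rule tor_ideal[OF I])

context p310
begin

abbreviation "TT \<equiv> tor R I"
abbreviation "JJ n \<equiv> ideal_pow R I n"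
abbreviation "ff \<equiv> a_r_coset R (tor R I)"

lemma J_ideal: "ideal (JJ n) R" by (rule ideal_pow_ideal[OF I])
lemma J_carr: "JJ n \<subseteq> carrier R" using ideal.Icarr[OF J_ideal] by blast
lemma J0: "\<zero> \<in> JJ n" by (rule ideal_zero'[OF J_ideal])
lemma T_ideal: "ideal TT R" by (rule tor_ideal[OF I])
lemma T_carr: "TT \<subseteq> carrier R" using ideal.Icarr[OF T_ideal] by blast
lemma T0: "\<zero> \<in> TT" by (rule ideal_zero'[OF T_ideal])

lemma TI_zero:
  assumes "t \<in> TT" "a \<in> I" shows "a \<otimes> t = \<zero>"
proof -
  have ac: "a \<in> carrier R" using ideal.Icarr[OF I assms(2)] .
  have tc: "t \<in> carrier R" using assms T_carr by blast
  have "a \<otimes> t \<in> TT" using ideal.I_l_closed[OF T_ideal assms(1) ac] .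
  moreover have "a \<otimes> t \<in> I" using ideal.I_r_closed[OF I assms(2) tc] .
  ultimately show ?thesis using TI by blast
qed

lemma TJ_zero:
  assumes "t \<in> TT" "t \<in> JJ (Suc n)" shows "t = \<zero>"
  using assms TI ideal_pow_Suc_sub[OF I, of n] by blast

lemma ann_tor:
  assumes "x \<in> carrier R" "\<forall>a\<in>I. a \<otimes> x = \<zero>" shows "x \<in> TT"
  unfolding tor_def
proof (simp add: assms(1), intro ballI)
  fix a assume a: "a \<in> I"
  have ac: "a \<in> carrier R" using ideal.Icarr[OF I a] .
  have "a [^] (Suc 0) \<otimes> x = \<zero>" using assms a ac by simp
  then show "\<exists>n::nat. n > 0 \<and> a [^] n \<otimes> x = \<zero>" by blast
qed

lemma SA: "adic_separated R I \<longleftrightarrow> (\<forall>y. (\<forall>n. y \<in> JJ n) \<longrightarrow> y = \<zero>)"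
  unfolding adic_separated_def using J0 by auto

lemma SQ: "adic_separated (R Quot TT) (quot_ideal R TT I) \<longleftrightarrow>
   (\<forall>y\<in>carrier R. (\<forall>n. \<exists>j\<in>JJ n. y \<ominus> j \<in> TT) \<longrightarrow> y \<in> TT)"
proof -
  have mem: "ff y \<in> ff ` JJ n \<longleftrightarrow> (\<exists>j\<in>JJ n. y \<ominus> j \<in> TT)" if y: "y \<in> carrier R" for y n
  proof
    assume "ff y \<in> ff ` JJ n"
    then obtain j where "j \<in> JJ n" "ff y = ff j" by blast
    then show "\<exists>j\<in>JJ n. y \<ominus> j \<in> TT" using T.rcos_eq_iff[OF y] J_carr by blast
  next
    assume "\<exists>j\<in>JJ n. y \<ominus> j \<in> TT"
    then obtain j where "j \<in> JJ n" "y \<ominus> j \<in> TT" by blast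
    then show "ff y \<in> ff ` JJ n" using T.rcos_eq_iff[OF y] J_carr by blast
  qed
  have zT: "ff y = TT \<longleftrightarrow> y \<in> TT" if "y \<in> carrier R" for y using T.rcos_zero_iff that by blast
  have Tin: "TT \<in> (\<Inter>n. ff ` JJ n)"
    using zT[OF zero_closed] T0 J0 by (metis (no_types, lifting) INT_I image_eqI)
  have form: "\<exists>y\<in>carrier R. Z = ff y" if "Z \<in> (\<Inter>n. ff ` JJ n)" for Z
  proof -
    have "Z \<in> ff ` JJ 0" using that by blast
    then obtain y where "y \<in> JJ 0" "Z = ff y" by (rule imageE) simp
    then show ?thesis by auto
  qed
  show ?thesis
    unfolding adic_separated_def quot_ideal_def T.quot_pow[OF I] T.quot_zero
  proof
    assume eq: "(\<Inter>n. ff ` JJ n) = {TT}"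
    show "\<forall>y\<in>carrier R. (\<forall>n. \<exists>j\<in>JJ n. y \<ominus> j \<in> TT) \<longrightarrow> y \<in> TT"
    proof (intro ballI impI)
      fix y assume y: "y \<in> carrier R" and h: "\<forall>n. \<exists>j\<in>JJ n. y \<ominus> j \<in> TT"
      have "\<forall>n. ff y \<in> ff ` JJ n" using mem[OF y] h by simp
      then have "ff y \<in> (\<Inter>n. ff ` JJ n)" by simp
      then show "y \<in> TT" using eq zT[OF y] by simp
    qed
  next
    assume h: "\<forall>y\<in>carrier R. (\<forall>n. \<exists>j\<in>JJ n. y \<ominus> j \<in> TT) \<longrightarrow> y \<in> TT"
    show "(\<Inter>n. ff ` JJ n) = {TT}"
    proof
      show "{TT} \<subseteq> (\<Inter>n. ff ` JJ n)" using Tin by simp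
      show "(\<Inter>n. ff ` JJ n) \<subseteq> {TT}"
      proof
        fix Xq assume Xq: "Xq \<in> (\<Inter>n. ff ` JJ n)"
        from form[OF Xq] obtain y where y: "y \<in> carrier R" "Xq = ff y" ..
        have "\<forall>n. ff y \<in> ff ` JJ n" using Xq y(2) by simp
        then have "\<forall>n. \<exists>j\<in>JJ n. y \<ominus> j \<in> TT" using mem[OF y(1)] by simp
        then have "y \<in> TT" using h y(1) by simp
        then show "Xq \<in> {TT}" using y(2) zT[OF y(1)] by simp
      qed
    qed
  qed
qed

lemma sep_equiv: "adic_separated R I \<longleftrightarrow> adic_separated (R Quot TT) (quot_ideal R TT I)"
  unfolding SA SQ
proof
  assume A: "\<forall>y. (\<forall>n. y \<in> JJ n) \<longrightarrow> y = \<zero>"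
  show "\<forall>y\<in>carrier R. (\<forall>n. \<exists>j\<in>JJ n. y \<ominus> j \<in> TT) \<longrightarrow> y \<in> TT"
  proof (intro ballI impI)
    fix y assume y: "y \<in> carrier R" and h: "\<forall>n. \<exists>j\<in>JJ n. y \<ominus> j \<in> TT"
    show "y \<in> TT"
    proof (rule ann_tor[OF y], intro ballI)
      fix a assume a: "a \<in> I"
      have ac: "a \<in> carrier R" using ideal.Icarr[OF I a] .
      have "a \<otimes> y \<in> JJ n" for n
      proof -
        obtain j where j: "j \<in> JJ n" "y \<ominus> j \<in> TT" using h by blast
        have jc: "j \<in> carrier R" using j J_carr by blast
        have "a \<otimes> y = a \<otimes> j \<oplus> a \<otimes> (y \<ominus> j)" using ac jc y by algebra
        also have "\<dots> = a \<otimes> j" using TI_zero[OF j(2) a] ac jc by simp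
        finally show ?thesis using ideal.I_l_closed[OF J_ideal j(1) ac] by simp
      qed
      then show "a \<otimes> y = \<zero>" using A by blast
    qed
  qed
next
  assume Q: "\<forall>y\<in>carrier R. (\<forall>n. \<exists>j\<in>JJ n. y \<ominus> j \<in> TT) \<longrightarrow> y \<in> TT"
  show "\<forall>y. (\<forall>n. y \<in> JJ n) \<longrightarrow> y = \<zero>"
  proof (intro allI impI)
    fix y assume h: "\<forall>n. y \<in> JJ n"
    then have y: "y \<in> carrier R" using J_carr by blast
    have "y \<ominus> y = \<zero>" using y by algebra
    then have "\<forall>n. \<exists>j\<in>JJ n. y \<ominus> j \<in> TT" using h T0 by metis
    then have "y \<in> TT" using Q y by blast
    then show "y = \<zero>" using TJ_zero h by blast
  qed
qed

lemma Jcos: "x \<in> carrier R \<Longrightarrow> w \<in> JJ n +> x \<longleftrightarrow> w \<in> carrier R \<and> w \<ominus> x \<in> JJ n"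
  by (rule ideal_cos_iff[OF J_ideal])

lemma Jself:
  assumes "x \<in> carrier R" shows "x \<in> JJ n +> x"
proof -
  interpret K: ideal "JJ n" R by (rule J_ideal)
  show ?thesis by (rule K.a_rcos_self[OF assms])
qed

lemma Jrepr:
  assumes "x \<in> carrier R" "z \<in> JJ n +> x" shows "JJ n +> x = JJ n +> z"
proof -
  interpret K: ideal "JJ n" R by (rule J_ideal)
  show ?thesis by (rule K.a_repr_independence'[OF assms(2,1)])
qed

lemma ff_eq: "x \<in> carrier R \<Longrightarrow> y \<in> carrier R \<Longrightarrow> ff x = ff y \<longleftrightarrow> x \<ominus> y \<in> TT"
  by (rule T.rcos_eq_iff)

lemma comp_fwd:
  assumes C: "adic_complete R I"
  shows "adic_complete (R Quot TT) (quot_ideal R TT I)"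
proof -
  have sepQ: "adic_separated (R Quot TT) (quot_ideal R TT I)"
    using C sep_equiv unfolding adic_complete_def by blast
  have CA: "\<forall>c::nat \<Rightarrow> 'a set.
        (\<forall>n. c n \<in> a_rcosets (JJ n)) \<and> (\<forall>n. c (Suc n) \<subseteq> c n)
        \<longrightarrow> (\<exists>x\<in>carrier R. \<forall>n. c n = JJ n +> x)"
    using C unfolding adic_complete_def by blast
  show ?thesis
    unfolding adic_complete_def
  proof (intro conjI allI impI)
    show "adic_separated (R Quot TT) (quot_ideal R TT I)" by (rule sepQ)
    fix c :: "nat \<Rightarrow> 'a set set"
    assume hc: "(\<forall>n. c n \<in> a_rcosets\<^bsub>R Quot TT\<^esub> ideal_pow (R Quot TT) (quot_ideal R TT I) n) \<and>
      (\<forall>n. c (Suc n) \<subseteq> c n)"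
    have hc1: "\<forall>n. \<exists>x\<in>carrier R. c n = ff ` (JJ n +> x)"
      using hc unfolding quot_ideal_def T.quot_pow[OF I] T.quot_rcosets[OF J_carr] by blast
    obtain x where x: "\<And>n. x n \<in> carrier R" "\<And>n. c n = ff ` (JJ n +> x n)"
      using hc1 by metis
    have "\<forall>n. \<exists>w. w \<in> JJ n +> x n \<and> ff (x (Suc n)) = ff w"
    proof
      fix n
      have "x (Suc n) \<in> JJ (Suc n) +> x (Suc n)" by (rule Jself[OF x(1)])
      then have "ff (x (Suc n)) \<in> c (Suc n)" using x(2) by blast
      then have "ff (x (Suc n)) \<in> c n" using hc by blast
      then show "\<exists>w. w \<in> JJ n +> x n \<and> ff (x (Suc n)) = ff w" using x(2) by blast
    qed
    then obtain w where w: "\<And>n. w n \<in> JJ n +> x n" "\<And>n. ff (x (Suc n)) = ff (w n)" by metis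
    have wc: "w n \<in> carrier R" and wJ: "w n \<ominus> x n \<in> JJ n" and wT: "x (Suc n) \<ominus> w n \<in> TT" for n
      using w Jcos x(1) ff_eq by blast+
    have "\<exists>y. \<forall>n. (y n \<in> carrier R \<and> y n \<ominus> x n \<in> TT) \<and> y (Suc n) \<ominus> y n \<in> JJ n"
    proof (rule dependent_nat_choice)
      show "\<exists>y. y \<in> carrier R \<and> y \<ominus> x 0 \<in> TT"
      proof (intro exI conjI)
        show "x 0 \<in> carrier R" by (rule x(1))
        have "x 0 \<ominus> x 0 = \<zero>" using x(1)[of 0] by algebra
        then show "x 0 \<ominus> x 0 \<in> TT" using T0 by simp
      qed
    next
      fix y n assume P: "y \<in> carrier R \<and> y \<ominus> x n \<in> TT"
      show "\<exists>y'. (y' \<in> carrier R \<and> y' \<ominus> x (Suc n) \<in> TT) \<and> y' \<ominus> y \<in> JJ n"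
      proof (intro exI conjI)
        have yc: "y \<in> carrier R" using P by blast
        show "y \<oplus> (w n \<ominus> x n) \<in> carrier R" using yc wc x(1) by simp
        have "y \<oplus> (w n \<ominus> x n) \<ominus> x (Suc n) = (y \<ominus> x n) \<ominus> (x (Suc n) \<ominus> w n)"
          using yc wc[of n] x(1)[of n] x(1)[of "Suc n"] by algebra
        then show "y \<oplus> (w n \<ominus> x n) \<ominus> x (Suc n) \<in> TT"
          using ideal_minus'[OF T_ideal] P wT by simp
        have "y \<oplus> (w n \<ominus> x n) \<ominus> y = w n \<ominus> x n"
          using yc wc[of n] x(1)[of n] by algebra
        then show "y \<oplus> (w n \<ominus> x n) \<ominus> y \<in> JJ n" using wJ by simp
      qed
    qed
    then obtain y where yc: "\<And>n. y n \<in> carrier R" and yT: "\<And>n. y n \<ominus> x n \<in> TT"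
      and yJ: "\<And>n. y (Suc n) \<ominus> y n \<in> JJ n" by blast
    have "\<exists>z\<in>carrier R. \<forall>n. JJ n +> y n = JJ n +> z"
    proof (rule CA[rule_format], intro conjI allI)
      fix n
      show "JJ n +> y n \<in> a_rcosets (JJ n)" by (rule a_rcosetsI[OF J_carr yc])
      show "JJ (Suc n) +> y (Suc n) \<subseteq> JJ n +> y n"
      proof
        fix v assume "v \<in> JJ (Suc n) +> y (Suc n)"
        then have vc: "v \<in> carrier R" and v: "v \<ominus> y (Suc n) \<in> JJ (Suc n)" using Jcos yc by blast+
        have v': "v \<ominus> y (Suc n) \<in> JJ n" using v ideal_pow_Suc_sub[OF I, of n] by blast
        have "v \<ominus> y n = (v \<ominus> y (Suc n)) \<oplus> (y (Suc n) \<ominus> y n)"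
          using vc yc[of n] yc[of "Suc n"] by algebra
        then have "v \<ominus> y n \<in> JJ n" using ideal_add'[OF J_ideal v' yJ] by simp
        then show "v \<in> JJ n +> y n" using Jcos yc vc by blast
      qed
    qed
    then obtain z where zc: "z \<in> carrier R" and z: "\<And>n. JJ n +> y n = JJ n +> z" by blast
    show "\<exists>Xq\<in>carrier (R Quot TT). \<forall>n. c n = ideal_pow (R Quot TT) (quot_ideal R TT I) n +>\<^bsub>R Quot TT\<^esub> Xq"
    proof (intro bexI allI)
      show "ff z \<in> carrier (R Quot TT)" using zc T.quot_carrier by blast
      fix n
      have "c n = ff ` (JJ n +> x n)" by (rule x(2))
      also have "\<dots> = (ff ` JJ n) +>\<^bsub>R Quot TT\<^esub> ff (x n)"
        using T.quot_coset[OF J_carr x(1)] by simp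
      also have "ff (x n) = ff (y n)" using ff_eq[OF yc[of n] x(1)[of n]] yT[of n] by simp
      also have "(ff ` JJ n) +>\<^bsub>R Quot TT\<^esub> ff (y n) = ff ` (JJ n +> y n)"
        using T.quot_coset[OF J_carr yc] by simp
      also have "\<dots> = ff ` (JJ n +> z)" using z by simp
      also have "\<dots> = (ff ` JJ n) +>\<^bsub>R Quot TT\<^esub> ff z"
        using T.quot_coset[OF J_carr zc] by simp
      finally show "c n = ideal_pow (R Quot TT) (quot_ideal R TT I) n +>\<^bsub>R Quot TT\<^esub> ff z"
        unfolding quot_ideal_def T.quot_pow[OF I] .
    qed
  qed
qed

lemma comp_bwd:
  assumes CQ: "adic_complete (R Quot TT) (quot_ideal R TT I)"
  shows "adic_complete R I"
proof -
  have sepA: "adic_separated R I"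
    using CQ sep_equiv unfolding adic_complete_def by blast
  have CQ': "\<forall>c::nat \<Rightarrow> 'a set set.
        (\<forall>n. c n \<in> a_rcosets\<^bsub>R Quot TT\<^esub> (ff ` JJ n)) \<and> (\<forall>n. c (Suc n) \<subseteq> c n)
        \<longrightarrow> (\<exists>Xq\<in>carrier (R Quot TT). \<forall>n. c n = (ff ` JJ n) +>\<^bsub>R Quot TT\<^esub> Xq)"
    using CQ unfolding adic_complete_def quot_ideal_def T.quot_pow[OF I] by blast
  show ?thesis
    unfolding adic_complete_def
  proof (intro conjI allI impI)
    show "adic_separated R I" by (rule sepA)
    fix c :: "nat \<Rightarrow> 'a set"
    assume hc: "(\<forall>n. c n \<in> a_rcosets (JJ n)) \<and> (\<forall>n. c (Suc n) \<subseteq> c n)"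
    have "\<forall>n. \<exists>x\<in>carrier R. c n = JJ n +> x"
      using hc unfolding A_RCOSETS_def' by blast
    then obtain x where xc: "\<And>n. x n \<in> carrier R" and x: "\<And>n. c n = JJ n +> x n" by metis
    have xin: "x n \<in> c n" for n using Jself[OF xc, of n] x[of n] by simp
    have "\<exists>Xq\<in>carrier (R Quot TT). \<forall>n. ff ` c n = (ff ` JJ n) +>\<^bsub>R Quot TT\<^esub> Xq"
    proof (rule CQ'[rule_format], intro conjI allI)
      fix n
      show "ff ` c n \<in> a_rcosets\<^bsub>R Quot TT\<^esub> (ff ` JJ n)"
        unfolding T.quot_rcosets[OF J_carr] using x xc by blast
      show "ff ` c (Suc n) \<subseteq> ff ` c n" using hc by blast
    qed
    then obtain Xq where Xq: "Xq \<in> carrier (R Quot TT)" "\<And>n. ff ` c n = (ff ` JJ n) +>\<^bsub>R Quot TT\<^esub> Xq"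
      by blast
    obtain y where yc: "y \<in> carrier R" and yX: "Xq = ff y" using Xq(1) T.quot_carrier by blast
    have cy: "ff ` c n = ff ` (JJ n +> y)" for n using Xq(2) yX T.quot_coset[OF J_carr yc] by simp
    have "\<forall>n. \<exists>w. w \<in> JJ n +> y \<and> ff (x n) = ff w"
    proof
      fix n
      have "ff (x n) \<in> ff ` (JJ n +> y)" using imageI[OF xin[of n], of ff] cy[of n] by simp
      then obtain w where "w \<in> JJ n +> y" "ff (x n) = ff w" by auto
      then show "\<exists>w. w \<in> JJ n +> y \<and> ff (x n) = ff w" by auto
    qed
    then obtain w where w: "\<And>n. w n \<in> JJ n +> y" "\<And>n. ff (x n) = ff (w n)" by metis
    have wc: "w n \<in> carrier R" and wJ: "w n \<ominus> y \<in> JJ n" for n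
      using w(1) Jcos yc by blast+
    have sT: "x n \<ominus> w n \<in> TT" for n using w(2) ff_eq xc wc by blast
    define s where "s n = x n \<ominus> w n" for n
    have sc: "s n \<in> carrier R" for n using s_def xc wc by simp
    have anti: "c n \<subseteq> c 1" if "n \<ge> 1" for n
      using lift_Suc_antimono_le[of c, OF _ that] hc by blast
    have sconst: "s n = s 1" if n: "n \<ge> 1" for n
    proof -
      have "x n \<in> JJ 1 +> x 1" using xin anti[OF n] x by blast
      then have d1: "x n \<ominus> x 1 \<in> JJ 1" using Jcos xc by blast
      have d2: "w n \<ominus> y \<in> JJ 1" using wJ ideal_pow_anti[OF I n] by blast
      have d3: "w 1 \<ominus> y \<in> JJ 1" by (rule wJ)
      have eq: "s n \<ominus> s 1 = ((x n \<ominus> x 1) \<ominus> (w n \<ominus> y)) \<oplus> (w 1 \<ominus> y)"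
        unfolding s_def using xc[of n] xc[of 1] wc[of n] wc[of 1] yc by algebra
      have inJ: "s n \<ominus> s 1 \<in> JJ (Suc 0)"
        unfolding eq using ideal_add'[OF J_ideal ideal_minus'[OF J_ideal d1 d2] d3] by simp
      have inT: "s n \<ominus> s 1 \<in> TT"
        using ideal_minus'[OF T_ideal] sT unfolding s_def by blast
      have z: "s n \<ominus> s 1 = \<zero>" using TJ_zero[OF inT inJ] .
      have "s n = (s n \<ominus> s 1) \<oplus> s 1" using sc[of n] sc[of 1] by algebra
      then show ?thesis using z sc by simp
    qed
    define z where "z = y \<oplus> s 1"
    have zc: "z \<in> carrier R" using z_def yc sc by simp
    have zx: "z \<ominus> x n \<in> JJ n" for n
    proof (cases "n = 0")
      case True
      have "z \<ominus> x 0 \<in> carrier R" using zc xc[of 0] by (rule minus_closed)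
      then show ?thesis using True by simp
    next
      case False
      then have sn: "s n = s 1" using sconst[of n] by simp
      have "z \<ominus> x n = y \<oplus> s n \<ominus> x n" unfolding z_def using sn by simp
      also have "\<dots> = \<zero> \<ominus> (w n \<ominus> y)"
        unfolding s_def using xc[of n] wc[of n] yc by algebra
      finally show ?thesis using ideal_minus'[OF J_ideal J0 wJ] by simp
    qed
    show "\<exists>z\<in>carrier R. \<forall>n. c n = JJ n +> z"
    proof (intro bexI allI)
      fix n
      have "z \<in> JJ n +> x n" using Jcos[OF xc[of n], of z n] zc zx[of n] by simp
      then show "c n = JJ n +> z" using Jrepr[OF xc[of n]] x[of n] by simp
    qed (rule zc)
  qed
qed

end

theorem proposition3p10:
  fixes A :: "('a, 'b) ring_scheme" and I :: "'a set"
  assumes "cring A" and "ideal I A"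
    and "tor A I \<inter> I = {\<zero>\<^bsub>A\<^esub>}"
  shows "(adic_separated A I \<longleftrightarrow>
           adic_separated (A Quot (tor A I)) (quot_ideal A (tor A I) I))
       \<and> (adic_complete A I \<longleftrightarrow>
           adic_complete (A Quot (tor A I)) (quot_ideal A (tor A I) I))"
proof -
  interpret p310 A I
    using assms by (simp add: p310_def p310_axioms_def)
  show ?thesis using sep_equiv comp_fwd comp_bwd by blast
qed

end
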